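(* Assume the standing setting described in the context. For $x\in\Lambda_\varepsilon$ and a bounded set $A\subset[0,\infty)$ let $\mathbbm{n}^\varepsilon_A(x):=\#\{t\in A:\Delta_t\mathbb{M}_\varepsilon(x)\neq0\}$ be the number of jumps of $\mathbb{M}_\varepsilon(x)$ in $A$. Then for any $[a,b]\subset[0,\infty)$ and any $p\ge1$, $$\sup_{\varepsilon\in(0,1]}\sup_{x\in\Lambda_\varepsilon}\mathbb{E}\Big[\big|\mathbbm{n}^\varepsilon_{[\varepsilon^{d+2\mathbf{k}}a,\,\varepsilon^{d+2\mathbf{k}}b]}(x)\big|^p\Big]^{1/p}<\infty,$$ locally uniformly in $a,b$ (the supremum over $\varepsilon$ is over those $\varepsilon$ with $\varepsilon^{-1}\in\mathbb{N}$).
   Context: Standing setting. Fix $d\in\mathbb{N}$. For $\varepsilon\in(0,1]$ with $\varepsilon^{-1}\in\mathbb{N}$ let $\Lambda_\varepsilon=(\varepsilon\mathbb{Z}/\mathbb{Z})^d$. On a filtered probability space satisfying the usual conditions, for each such $\varepsilon$ let $(\mathbb{M}_\varepsilon(t,x))_{t\ge0}$, $x\in\Lambda_\varepsilon$, be càdlàg square-integrable martingales; $\Delta_t\mathbb{M}_\varepsilon(x)=\mathbb{M}_\varepsilon(t,x)-\mathbb{M}_\varepsilon(t-,x)$; $\langle\cdot,\cdot\rangle$ is the predictable quadratic covariation. All constants below are non-random and independent of $\varepsilon,s,t,x$: (A1) $\langle \mathbb{M}_\varepsilon(x),\mathbb{M}_\varepsilon(y)\rangle_t=0$ for $x\neq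 y$, and $\langle\mathbb{M}_\varepsilon(x)\rangle_t=\varepsilon^{-d}\int_0^t\mathcal{C}_\varepsilon(s,x)\,ds$ with $\mathcal{C}_\varepsilon$ progressively measurable, $|\mathcal{C}_\varepsilon|\le C$ a.s.; (A2) for every $T>0$, a.s. $\Delta_t\mathbb{M}_\varepsilon(x)\Delta_t\mathbb{M}_\varepsilon(y)=0$ for all $x\ne y$, $t\in[0,T]$; (A3) there exist $\mathbf{k}>-d/2$ and $c>0$ such that a.s. $|\Delta_t\mathbb{M}_\varepsilon(x)|=c\varepsilon^{\mathbf{k}}$ whenever $\Delta_t\mathbb{M}_\varepsilon(x)\ne0$; (A4) $\mathbb{M}_\varepsilon(t,x)=\sum_{0\le s\le t}\Delta_s\mathbb{M}_\varepsilon(x)-\varepsilon^{-\mathbf{k}-d}\int_0^t\mathtt{C}_\varepsilon(s,x)\,ds$ with $\mathtt{C}_\varepsilon$ progressively measurable, $|\mathtt{C}_\varepsilon|\le C$ a.s. *)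

theory Defs
  imports "HOL-Probability.Probability"
begin

text \<open>Lattice (eps Z / Z)^d with eps = 1/N, encoded as {0..N-1}^d (coordinates beyond d are 0).\<close>
definition lattice :: "nat \<Rightarrow> nat \<Rightarrow> (nat \<Rightarrow> nat) set" where
  "lattice N d = {x. (\<forall>i<d. x i < N) \<and> (\<forall>i\<ge>d. x i = 0)}"

definition filtration :: "'a measure \<Rightarrow> (real \<Rightarrow> 'a measure) \<Rightarrow> bool" where
  "filtration M F \<longleftrightarrow> (\<forall>t\<ge>0. subalgebra M (F t)) \<and>
     (\<forall>s t. 0 \<le> s \<longrightarrow> s \<le> t \<longrightarrow> sets (F s) \<subseteq> sets (F t))"

definition usual_conditions :: "'a measure \<Rightarrow> (real \<Rightarrow> 'a measure) \<Rightarrow> bool" where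
  "usual_conditions M F \<longleftrightarrow> complete_measure M \<and> null_sets M \<subseteq> sets (F 0) \<and>
     (\<forall>t\<ge>0. sets (F t) = (\<Inter>s\<in>{t<..}. sets (F s)))"

definition adapted :: "'a measure \<Rightarrow> (real \<Rightarrow> 'a measure) \<Rightarrow> (real \<Rightarrow> 'a \<Rightarrow> real) \<Rightarrow> bool" where
  "adapted M F X \<longleftrightarrow> (\<forall>t\<ge>0. X t \<in> borel_measurable (F t))"

definition martingale :: "'a measure \<Rightarrow> (real \<Rightarrow> 'a measure) \<Rightarrow> (real \<Rightarrow> 'a \<Rightarrow> real) \<Rightarrow> bool" where
  "martingale M F X \<longleftrightarrow> adapted M F X \<and> (\<forall>t\<ge>0. integrable M (X t)) \<and>
     (\<forall>s t. 0 \<le> s \<longrightarrow> s \<le> t \<longrightarrow> (AE \<omega> in M. real_cond_exp M (F s) (X t) \<omega> = X s \<omega>))"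

definition square_integrable :: "'a measure \<Rightarrow> (real \<Rightarrow> 'a \<Rightarrow> real) \<Rightarrow> bool" where
  "square_integrable M X \<longleftrightarrow> (\<forall>t\<ge>0. integrable M (\<lambda>\<omega>. (X t \<omega>)\<^sup>2))"

definition cadlag :: "(real \<Rightarrow> real) \<Rightarrow> bool" where
  "cadlag f \<longleftrightarrow> (\<forall>t\<ge>0. continuous (at_right t) f \<and> (t > 0 \<longrightarrow> (\<exists>l. (f \<longlongrightarrow> l) (at_left t))))"

text \<open>Jump f(t) - f(t-), with the convention f(0-) = f(0).\<close>
definition jump :: "(real \<Rightarrow> real) \<Rightarrow> real \<Rightarrow> real" where
  "jump f t = (if t > 0 then f t - Lim (at_left t) f else 0)"

definition finite_variation :: "(real \<Rightarrow> real) \<Rightarrow> bool" where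
  "finite_variation f \<longleftrightarrow> (\<forall>t\<ge>0. \<exists>g h. mono_on {0..t} g \<and> mono_on {0..t} h \<and>
      (\<forall>s\<in>{0..t}. f s = g s - h s))"

definition progressive :: "'a measure \<Rightarrow> (real \<Rightarrow> 'a measure) \<Rightarrow> (real \<Rightarrow> 'a \<Rightarrow> real) \<Rightarrow> bool" where
  "progressive M F X \<longleftrightarrow> (\<forall>t\<ge>0. (\<lambda>(s, \<omega>). X s \<omega>) \<in>
      borel_measurable (restrict_space (borel \<Otimes>\<^sub>M F t) ({0..t} \<times> space M)))"

definition predictable_sigma :: "'a measure \<Rightarrow> (real \<Rightarrow> 'a measure) \<Rightarrow> (real \<times> 'a) measure" where
  "predictable_sigma M F = sigma ({0..} \<times> space M)
     ({{0} \<times> A | A. A \<in> sets (F 0)} \<union> {{s<..t} \<times> A | s t A. 0 \<le> s \<and> s < t \<and> A \<in> sets (F s)})"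

definition is_pred_qcov :: "'a measure \<Rightarrow> (real \<Rightarrow> 'a measure) \<Rightarrow> (real \<Rightarrow> 'a \<Rightarrow> real) \<Rightarrow>
    (real \<Rightarrow> 'a \<Rightarrow> real) \<Rightarrow> (real \<Rightarrow> 'a \<Rightarrow> real) \<Rightarrow> bool" where
  "is_pred_qcov M F X Y A \<longleftrightarrow>
     (\<lambda>(t, \<omega>). A t \<omega>) \<in> borel_measurable (predictable_sigma M F) \<and>
     (\<forall>\<omega>\<in>space M. A 0 \<omega> = 0) \<and>
     (AE \<omega> in M. cadlag (\<lambda>t. A t \<omega>) \<and> finite_variation (\<lambda>t. A t \<omega>)) \<and>
     martingale M F (\<lambda>t \<omega>. X t \<omega> * Y t \<omega> - A t \<omega>)"

definition njumps :: "(real \<Rightarrow> real) \<Rightarrow> real set \<Rightarrow> nat" where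
  "njumps f S = card {t\<in>S. jump f t \<noteq> 0}"

end

theory Submission
  imports Defs
begin


lemma bdd_mult_integrable:
  fixes f Z :: "'a \<Rightarrow> real"
  assumes "integrable M f" "Z \<in> borel_measurable M" "\<And>w. \<bar>Z w\<bar> \<le> Zb"
  shows "integrable M (\<lambda>w. Z w * f w)"
proof (rule Bochner_Integration.integrable_bound[where f="\<lambda>w. Zb * f w"])
  show "integrable M (\<lambda>w. Zb * f w)" using assms(1) by simp
  show "(\<lambda>w. Z w * f w) \<in> borel_measurable M" using assms(1,2) by measurable
  show "AE x in M. norm (Z x * f x) \<le> norm (Zb * f x)"
  proof (rule AE_I2)
    fix x
    have "\<bar>Z x\<bar> * \<bar>f x\<bar> \<le> \<bar>Zb\<bar> * \<bar>f x\<bar>" using assms(3)[of x]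
      by (intro mult_right_mono) auto
    then show "norm (Z x * f x) \<le> norm (Zb * f x)" by (simp add: abs_mult)
  qed
qed

lemma incr_bound:
  fixes M Fs :: "'a measure" and Xs Xt As At Z :: "'a \<Rightarrow> real"
  assumes prob: "prob_space M" and sub: "subalgebra M Fs"
   and Xs: "Xs \<in> borel_measurable Fs" and Xt: "Xt \<in> borel_measurable M"
   and sqs: "integrable M (\<lambda>w. (Xs w)\<^sup>2)" and sqt: "integrable M (\<lambda>w. (Xt w)\<^sup>2)"
   and ces: "AE w in M. real_cond_exp M Fs Xt w = Xs w"
   and Ws: "integrable M (\<lambda>w. Xs w * Xs w - As w)"
   and Wt: "integrable M (\<lambda>w. Xt w * Xt w - At w)"
   and cew: "AE w in M. real_cond_exp M Fs (\<lambda>w. Xt w * Xt w - At w) w = Xs w * Xs w - As w"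
   and Abd: "AE w in M. At w - As w \<le> L"
   and Zm: "Z \<in> borel_measurable Fs" and Zp: "\<And>w. 0 \<le> Z w" and Zb: "\<And>w. Z w \<le> Zb"
  shows "(\<integral>w. Z w * (Xt w - Xs w)\<^sup>2 \<partial>M) \<le> L * (\<integral>w. Z w \<partial>M)"
    and "integrable M (\<lambda>w. Z w * (Xt w - Xs w)\<^sup>2)"
proof -
  interpret prob_space M by (rule prob)
  interpret finite_measure_subalgebra M Fs
    by unfold_locales (rule sub)
  have XsM: "Xs \<in> borel_measurable M" by (rule measurable_from_subalg[OF sub Xs])
  have ZM: "Z \<in> borel_measurable M" by (rule measurable_from_subalg[OF sub Zm])
  have Zabs: "\<And>w. \<bar>Z w\<bar> \<le> Zb" using Zp Zb by (metis abs_of_nonneg)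
  have Wtm: "(\<lambda>w. Xt w * Xt w - At w) \<in> borel_measurable M" using Wt by auto
  have Wsm: "(\<lambda>w. Xs w * Xs w - As w) \<in> borel_measurable M" using Ws by auto
  have AtM: "At \<in> borel_measurable M"
  proof -
    have "(\<lambda>w. Xt w * Xt w - (Xt w * Xt w - At w)) \<in> borel_measurable M" using Xt Wtm by measurable
    then show ?thesis by simp
  qed
  have AsM: "As \<in> borel_measurable M"
  proof -
    have "(\<lambda>w. Xs w * Xs w - (Xs w * Xs w - As w)) \<in> borel_measurable M" using XsM Wsm by measurable
    then show ?thesis by simp
  qed
  have sqs': "integrable M (\<lambda>w. Xs w * Xs w)" using sqs by (simp add: power2_eq_square)
  have sqt': "integrable M (\<lambda>w. Xt w * Xt w)" using sqt by (simp add: power2_eq_square)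
  have Ati: "integrable M At"
  proof -
    have "integrable M (\<lambda>w. Xt w * Xt w - (Xt w * Xt w - At w))" using Bochner_Integration.integrable_diff[OF sqt' Wt] by simp
    then show ?thesis by simp
  qed
  have Asi: "integrable M As"
  proof -
    have "integrable M (\<lambda>w. Xs w * Xs w - (Xs w * Xs w - As w))" using Bochner_Integration.integrable_diff[OF sqs' Ws] by simp
    then show ?thesis by simp
  qed
  have XsXt: "integrable M (\<lambda>w. Xs w * Xt w)"
  proof (rule Bochner_Integration.integrable_bound[where f="\<lambda>w. Xs w * Xs w + Xt w * Xt w"])
    show "integrable M (\<lambda>w. Xs w * Xs w + Xt w * Xt w)" using sqs' sqt' by simp
    show "(\<lambda>w. Xs w * Xt w) \<in> borel_measurable M" using XsM Xt by measurable
    show "AE x in M. norm (Xs x * Xt x) \<le> norm (Xs x * Xs x + Xt x * Xt x)"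
    proof (rule AE_I2)
      fix x
      have "2 * \<bar>Xs x\<bar> * \<bar>Xt x\<bar> \<le> \<bar>Xs x\<bar>^2 + \<bar>Xt x\<bar>^2"
        by (smt (verit) sum_squares_bound)
      moreover have "0 \<le> \<bar>Xs x\<bar> * \<bar>Xt x\<bar>" by simp
      moreover have "\<bar>Xs x\<bar>^2 + \<bar>Xt x\<bar>^2 = Xs x * Xs x + Xt x * Xt x"
        by (simp add: power2_eq_square)
      ultimately have h: "\<bar>Xs x\<bar> * \<bar>Xt x\<bar> \<le> Xs x * Xs x + Xt x * Xt x"
        by linarith
      have "0 \<le> Xs x * Xs x + Xt x * Xt x" by simp
      then show "norm (Xs x * Xt x) \<le> norm (Xs x * Xs x + Xt x * Xt x)"
        using h by (simp add: abs_mult)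
    qed
  qed
  have e1: "(\<integral>w. (Z w * Xs w) * Xt w \<partial>M) = (\<integral>w. (Z w * Xs w) * Xs w \<partial>M)"
  proof -
    have i: "integrable M (\<lambda>w. (Z w * Xs w) * Xt w)"
      using bdd_mult_integrable[OF XsXt ZM Zabs] by (simp add: mult.assoc)
    have zm: "(\<lambda>w. Z w * Xs w) \<in> borel_measurable Fs" using Zm Xs by measurable
    have "(\<integral>w. (Z w * Xs w) * Xt w \<partial>M) = (\<integral>w. (Z w * Xs w) * real_cond_exp M Fs Xt w \<partial>M)"
      using real_cond_exp_intg(2)[OF i zm Xt] by simp
    also have "\<dots> = (\<integral>w. (Z w * Xs w) * Xs w \<partial>M)"
      by (rule integral_cong_AE) (use ces XsM ZM in auto)
    finally show ?thesis .
  qed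
  have e2: "(\<integral>w. Z w * (Xt w * Xt w - At w) \<partial>M) = (\<integral>w. Z w * (Xs w * Xs w - As w) \<partial>M)"
  proof -
    have i: "integrable M (\<lambda>w. Z w * (Xt w * Xt w - At w))"
      using bdd_mult_integrable[OF Wt ZM Zabs] .
    have "(\<integral>w. Z w * (Xt w * Xt w - At w) \<partial>M) = (\<integral>w. Z w * real_cond_exp M Fs (\<lambda>w. Xt w * Xt w - At w) w \<partial>M)"
      using real_cond_exp_intg(2)[OF i Zm Wtm] by simp
    also have "\<dots> = (\<integral>w. Z w * (Xs w * Xs w - As w) \<partial>M)"
      by (rule integral_cong_AE) (use cew XsM ZM AsM in auto)
    finally show ?thesis .
  qed
  have iZXsXt: "integrable M (\<lambda>w. Z w * (Xs w * Xt w))" using bdd_mult_integrable[OF XsXt ZM Zabs] .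
  have iZXs2: "integrable M (\<lambda>w. Z w * (Xs w * Xs w))" using bdd_mult_integrable[OF sqs' ZM Zabs] .
  have iZWt: "integrable M (\<lambda>w. Z w * (Xt w * Xt w - At w))" using bdd_mult_integrable[OF Wt ZM Zabs] .
  have iZWs: "integrable M (\<lambda>w. Z w * (Xs w * Xs w - As w))" using bdd_mult_integrable[OF Ws ZM Zabs] .
  have iZA: "integrable M (\<lambda>w. Z w * (At w - As w))"
    using bdd_mult_integrable[OF Bochner_Integration.integrable_diff[OF Ati Asi] ZM Zabs] .
  have pw: "\<And>w. Z w * (Xt w - Xs w)\<^sup>2 = Z w * (Xt w * Xt w - At w) - Z w * (Xs w * Xs w - As w)
      + Z w * (At w - As w) - 2 * (Z w * (Xs w * Xt w)) + 2 * (Z w * (Xs w * Xs w))"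
    by (simp add: power2_eq_square algebra_simps)
  show "integrable M (\<lambda>w. Z w * (Xt w - Xs w)\<^sup>2)"
    unfolding pw using iZXsXt iZXs2 iZWt iZWs iZA by simp
  have "(\<integral>w. Z w * (Xt w - Xs w)\<^sup>2 \<partial>M) = (\<integral>w. Z w * (Xt w * Xt w - At w) \<partial>M) - (\<integral>w. Z w * (Xs w * Xs w - As w) \<partial>M)
      + (\<integral>w. Z w * (At w - As w) \<partial>M) - 2 * (\<integral>w. Z w * (Xs w * Xt w) \<partial>M) + 2 * (\<integral>w. Z w * (Xs w * Xs w) \<partial>M)"
    unfolding pw using iZXsXt iZXs2 iZWt iZWs iZA by simp
  also have "\<dots> = (\<integral>w. Z w * (At w - As w) \<partial>M)"
    using e1 e2 by (simp add: mult.assoc)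
  also have "\<dots> \<le> (\<integral>w. Z w * L \<partial>M)"
  proof (rule integral_mono_AE[OF iZA])
    show "integrable M (\<lambda>w. Z w * L)" using bdd_mult_integrable[of M "\<lambda>_. L", OF _ ZM Zabs] by (simp add: mult.commute)
    show "AE x in M. Z x * (At x - As x) \<le> Z x * L" using Abd by eventually_elim (simp add: Zp mult_left_mono)
  qed
  also have "\<dots> = L * (\<integral>w. Z w \<partial>M)" by (simp add: mult.commute)
  finally show "(\<integral>w. Z w * (Xt w - Xs w)\<^sup>2 \<partial>M) \<le> L * (\<integral>w. Z w \<partial>M)" .
qed

lemma cheb_bound:
  fixes M Fs :: "'a measure" and Xs Xt As At Z :: "'a \<Rightarrow> real"
  assumes prob: "prob_space M" and sub: "subalgebra M Fs"
   and Xs: "Xs \<in> borel_measurable Fs" and Xt: "Xt \<in> borel_measurable M"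
   and sqs: "integrable M (\<lambda>w. (Xs w)\<^sup>2)" and sqt: "integrable M (\<lambda>w. (Xt w)\<^sup>2)"
   and ces: "AE w in M. real_cond_exp M Fs Xt w = Xs w"
   and Ws: "integrable M (\<lambda>w. Xs w * Xs w - As w)"
   and Wt: "integrable M (\<lambda>w. Xt w * Xt w - At w)"
   and cew: "AE w in M. real_cond_exp M Fs (\<lambda>w. Xt w * Xt w - At w) w = Xs w * Xs w - As w"
   and Abd: "AE w in M. At w - As w \<le> L"
   and Zm: "Z \<in> borel_measurable Fs" and Zp: "\<And>w. 0 \<le> Z w" and Zb: "\<And>w. Z w \<le> Zb"
   and e: "e > 0"
  shows "(\<integral>w. Z w * indicator {w. e \<le> \<bar>Xt w - Xs w\<bar>} w \<partial>M) \<le> L / e\<^sup>2 * (\<integral>w. Z w \<partial>M)"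
proof -
  note ib = incr_bound[OF assms(1-14)]
  interpret prob_space M by (rule prob)
  have XsM: "Xs \<in> borel_measurable M" by (rule measurable_from_subalg[OF sub Xs])
  have ZM: "Z \<in> borel_measurable M" by (rule measurable_from_subalg[OF sub Zm])
  have Zabs: "\<And>w. \<bar>Z w\<bar> \<le> Zb" using Zp Zb by (metis abs_of_nonneg)
  have i1: "integrable M (\<lambda>w. Z w * indicator {w. e \<le> \<bar>Xt w - Xs w\<bar>} w)"
  proof (rule bdd_mult_integrable[where Zb=1, of M "\<lambda>w. Z w" "\<lambda>w. indicator {w. e \<le> \<bar>Xt w - Xs w\<bar>} w", simplified mult.commute])
    show "integrable M Z"
      by (rule Bochner_Integration.integrable_bound[where f="\<lambda>_. Zb"]) (use ZM in \<open>auto intro!: AE_I2 order_trans[OF Zabs abs_ge_self]\<close>)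
    show "(\<lambda>w. indicator {w. e \<le> \<bar>Xt w - Xs w\<bar>} w :: real) \<in> borel_measurable M"
      using Xt XsM by measurable
    show "\<And>w. \<bar>indicator {w. e \<le> \<bar>Xt w - Xs w\<bar>} w :: real\<bar> \<le> 1" by (simp split: split_indicator)
  qed
  have i2: "integrable M (\<lambda>w. Z w * (Xt w - Xs w)\<^sup>2 / e\<^sup>2)" using ib(2) by simp
  have "(\<integral>w. Z w * indicator {w. e \<le> \<bar>Xt w - Xs w\<bar>} w \<partial>M) \<le> (\<integral>w. Z w * (Xt w - Xs w)\<^sup>2 / e\<^sup>2 \<partial>M)"
  proof (rule integral_mono[OF i1 i2])
    fix w
    show "Z w * indicator {w. e \<le> \<bar>Xt w - Xs w\<bar>} w \<le> Z w * (Xt w - Xs w)\<^sup>2 / e\<^sup>2"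
    proof (cases "e \<le> \<bar>Xt w - Xs w\<bar>")
      case True
      then have "e\<^sup>2 \<le> \<bar>Xt w - Xs w\<bar>\<^sup>2" using e by (intro power_mono) auto
      then have "1 \<le> (Xt w - Xs w)\<^sup>2 / e\<^sup>2" using e by simp
      then have "Z w * 1 \<le> Z w * ((Xt w - Xs w)\<^sup>2 / e\<^sup>2)" using Zp by (intro mult_left_mono) auto
      then show ?thesis using True by simp
    next
      case False
      then show ?thesis using Zp by simp
    qed
  qed
  also have "\<dots> = (\<integral>w. Z w * (Xt w - Xs w)\<^sup>2 \<partial>M) / e\<^sup>2" by simp
  also have "\<dots> \<le> L * (\<integral>w. Z w \<partial>M) / e\<^sup>2" using ib(1) e by (simp add: divide_right_mono)
  finally show ?thesis by simp
qed

lemma exp_sum_bound: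
  fixes M :: "'a measure" and G :: "nat \<Rightarrow> 'a measure" and xi :: "nat \<Rightarrow> 'a \<Rightarrow> real"
  assumes prob: "prob_space M" and sub: "\<And>i. subalgebra M (G i)"
    and mono: "\<And>i j. i \<le> j \<Longrightarrow> sets (G i) \<subseteq> sets (G j)"
    and xim: "\<And>i. xi i \<in> borel_measurable (G (Suc i))"
    and xi01: "\<And>i w. xi i w = 0 \<or> xi i w = 1"
    and qp: "\<And>i. 0 \<le> q i"
    and bnd: "\<And>i Z Zb. Z \<in> borel_measurable (G i) \<Longrightarrow> (\<And>w. 0 \<le> Z w) \<Longrightarrow> (\<And>w. Z w \<le> Zb) \<Longrightarrow>
        (\<integral>w. Z w * xi i w \<partial>M) \<le> q i * (\<integral>w. Z w \<partial>M)"
  shows "(\<integral>w. exp (\<Sum>i<n. xi i w) \<partial>M) \<le> exp (2 * (\<Sum>i<n. q i))"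
    and "integrable M (\<lambda>w. exp (\<Sum>i<n. xi i w))"
    and "(\<lambda>w. exp (\<Sum>i<n. xi i w)) \<in> borel_measurable (G n)"
proof -
  interpret prob_space M by (rule prob)
  have meas: "(\<lambda>w. exp (\<Sum>i<n. xi i w)) \<in> borel_measurable (G n)" for n
  proof -
    have "xi i \<in> borel_measurable (G n)" if "i < n" for i
    proof -
      have sp: "space (G (Suc i)) = space (G n)" using sub[of "Suc i"] sub[of n] by (simp add: subalgebra_def)
      have "subalgebra (G n) (G (Suc i))" unfolding subalgebra_def using sp mono[of "Suc i" n] that by auto
      then show ?thesis using measurable_from_subalg xim by blast
    qed
    then show ?thesis by measurable
  qed
  have bd: "\<And>w. exp (\<Sum>i<n. xi i w) \<le> exp (real n)" for n
  proof -
    fix w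
    have "(\<Sum>i<n. xi i w) \<le> (\<Sum>i<n. 1)" by (intro sum_mono) (metis order.refl zero_le_one xi01)
    then show "exp (\<Sum>i<n. xi i w) \<le> exp (real n)" by simp
  qed
  have integ: "integrable M (\<lambda>w. exp (\<Sum>i<n. xi i w))" for n
    by (rule Bochner_Integration.integrable_bound[where f="\<lambda>_. exp (real n)"])
       (use measurable_from_subalg[OF sub meas] bd in auto)
  show "integrable M (\<lambda>w. exp (\<Sum>i<n. xi i w))" by (rule integ)
  show "(\<lambda>w. exp (\<Sum>i<n. xi i w)) \<in> borel_measurable (G n)" by (rule meas)
  show "(\<integral>w. exp (\<Sum>i<n. xi i w) \<partial>M) \<le> exp (2 * (\<Sum>i<n. q i))"
  proof (induction n)
    case 0
    then show ?case by (simp add: prob_space)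
  next
    case (Suc n)
    define Z where "Z = (\<lambda>w. exp (\<Sum>i<n. xi i w))"
    have Zp: "\<And>w. 0 \<le> Z w" unfolding Z_def by simp
    have pw: "exp (\<Sum>i<Suc n. xi i w) \<le> Z w + 2 * (Z w * xi n w)" for w
    proof -
      have "exp (\<Sum>i<Suc n. xi i w) = Z w * exp (xi n w)" unfolding Z_def by (simp add: exp_add)
      also have "exp (xi n w) \<le> 1 + 2 * xi n w" using xi01[of n w] exp_le by auto
      then have "Z w * exp (xi n w) \<le> Z w * (1 + 2 * xi n w)" using Zp by (intro mult_left_mono) auto
      finally show ?thesis by (simp add: algebra_simps)
    qed
    have iZ: "integrable M Z" unfolding Z_def by (rule integ)
    have ZG: "Z \<in> borel_measurable (G n)" unfolding Z_def by (rule meas)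
    have iZx: "integrable M (\<lambda>w. Z w * xi n w)"
    proof (rule bdd_mult_integrable[where Zb=1, of M Z "xi n", simplified mult.commute])
      show "integrable M Z" by (rule iZ)
      show "xi n \<in> borel_measurable M" using measurable_from_subalg[OF sub xim] .
      show "\<And>w. \<bar>xi n w\<bar> \<le> 1" using xi01 by (metis abs_one abs_zero order.refl zero_le_one)
    qed
    have "(\<integral>w. exp (\<Sum>i<Suc n. xi i w) \<partial>M) \<le> (\<integral>w. Z w + 2 * (Z w * xi n w) \<partial>M)"
      by (rule integral_mono[OF integ]) (use iZ iZx pw in auto)
    also have "\<dots> = (\<integral>w. Z w \<partial>M) + 2 * (\<integral>w. Z w * xi n w \<partial>M)" using iZ iZx by simp
    also have "\<dots> \<le> (\<integral>w. Z w \<partial>M) + 2 * (q n * (\<integral>w. Z w \<partial>M))"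
    proof -
      have "(\<integral>w. Z w * xi n w \<partial>M) \<le> q n * (\<integral>w. Z w \<partial>M)"
        by (rule bnd[OF ZG Zp]) (unfold Z_def, rule bd)
      then show ?thesis by simp
    qed
    also have "\<dots> = (1 + 2 * q n) * (\<integral>w. Z w \<partial>M)" by (simp add: algebra_simps)
    also have "\<dots> \<le> exp (2 * q n) * exp (2 * (\<Sum>i<n. q i))"
    proof (rule mult_mono)
      show "1 + 2 * q n \<le> exp (2 * q n)" using exp_ge_add_one_self[of "2 * q n"] by simp
      show "(\<integral>w. Z w \<partial>M) \<le> exp (2 * (\<Sum>i<n. q i))" using Suc unfolding Z_def .
      show "0 \<le> exp (2 * q n)" by simp
      show "0 \<le> (\<integral>w. Z w \<partial>M)" using Zp by simp
    qed
    also have "\<dots> = exp (2 * (\<Sum>i<Suc n. q i))" by (simp add: exp_add[symmetric] algebra_simps)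
    finally show ?case .
  qed
qed



lemma idx_props:
  fixes s v :: real and m :: nat
  assumes "0 < s" "s \<le> v" "0 < m"
  defines "i \<equiv> nat \<lceil>s * m / v\<rceil> - 1"
  shows "v * real i / m < s" "s \<le> v * real (Suc i) / m" "s - v / m \<le> v * real i / m"
    "v * real (Suc i) / m < s + v / m" "i < m"
proof -
  have v: "v > 0" using assms by linarith
  have mp: "real m > 0" using assms by simp
  define c where "c = \<lceil>s * m / v\<rceil>"
  have pos: "s * m / v > 0" using assms v by simp
  have c1: "c \<ge> 1" unfolding c_def using pos by (simp add: one_le_ceiling) 
  have c2: "c - 1 < s * m / v" "s * m / v \<le> c" unfolding c_def by linarith+
  have le: "s * m / v \<le> m" using assms v by (simp add: field_simps)
  have c3: "c \<le> m" using c2(2) le unfolding c_def by (simp add: ceiling_le_iff)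
  have ri: "real i = real_of_int c - 1" unfolding i_def c_def[symmetric] using c1 by (simp add: of_nat_diff)
  have rs: "real (Suc i) = real_of_int c" using ri by simp
  have "(real_of_int c - 1) * v < s * m" using c2(1) v by (simp add: field_simps)
  then show "v * real i / m < s" using mp unfolding ri by (simp add: field_simps)
  have "s * m \<le> real_of_int c * v" using c2(2) v by (simp add: field_simps)
  then show "s \<le> v * real (Suc i) / m" using mp unfolding rs by (simp add: field_simps)
  have "s * m / v - 1 \<le> real_of_int c - 1" using c2(2) by simp
  then have "(s * m / v - 1) * v \<le> (real_of_int c - 1) * v" using v by (intro mult_right_mono) auto
  then have "s * m - v \<le> (real_of_int c - 1) * v" using v by (simp add: field_simps)
  then show "s - v / m \<le> v * real i / m" using mp unfolding ri by (simp add: field_simps)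
  have "real_of_int c * v < (s * m / v + 1) * v" using c2(1) v by (intro mult_strict_right_mono) auto
  also have "(s * m / v + 1) * v = s * m + v" using v by (simp add: field_simps)
  finally have "real_of_int c * v < s * m + v" .
  then show "v * real (Suc i) / m < s + v / m" using mp unfolding rs by (simp add: field_simps)
  show "i < m" unfolding i_def c_def[symmetric] using c1 c3 by linarith
qed

lemma ev_small:
  fixes v eta :: real
  assumes "v > 0" "eta > 0"
  shows "eventually (\<lambda>m::nat. 0 < m \<and> v / real m < eta) sequentially"
proof -
  have "eventually (\<lambda>m::nat. nat \<lceil>v / eta\<rceil> + 1 \<le> m) sequentially" by (rule eventually_ge_at_top)
  then show ?thesis
  proof eventually_elim
    case (elim m)
    then have m: "real m \<ge> real (nat \<lceil>v / eta\<rceil>) + 1" by linarith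
    have "real (nat \<lceil>v / eta\<rceil>) \<ge> v / eta" by linarith
    then have gt: "real m > v / eta" using m by linarith
    then have "v < real m * eta" using assms by (simp add: field_simps)
    moreover have "0 < m" using elim by simp
    ultimately show ?case using assms by (simp add: field_simps)
  qed
qed

lemma path_count:
  fixes f :: "real \<Rightarrow> real" and S :: "real set" and v delta :: real
  assumes cad: "cadlag f" and fin: "finite S" and Ssub: "S \<subseteq> {0<..v}"
    and big: "\<And>s. s \<in> S \<Longrightarrow> delta \<le> \<bar>jump f s\<bar>" and dp: "delta > 0" and vp: "v > 0"
  shows "eventually (\<lambda>m. card S \<le> card {i. i < m \<and>
     delta / 2 \<le> \<bar>f (v * real (Suc i) / real m) - f (v * real i / real m)\<bar>}) sequentially"
proof -
  define idx where "idx m s = nat \<lceil>s * real m / v\<rceil> - 1" for m :: nat and s :: real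
  define Good where "Good m = {i. i < m \<and>
     delta / 2 \<le> \<bar>f (v * real (Suc i) / real m) - f (v * real i / real m)\<bar>}" for m
  have one: "eventually (\<lambda>m. 0 < m \<and> idx m s \<in> Good m) sequentially" if sS: "s \<in> S" for s
  proof -
    have s0: "0 < s" "s \<le> v" using sS Ssub by auto
    have "\<exists>l. (f \<longlongrightarrow> l) (at_left s)" using cad s0 unfolding cadlag_def by auto
    then obtain L where L: "(f \<longlongrightarrow> L) (at_left s)" by blast
    have jL: "jump f s = f s - L" unfolding jump_def using s0 L
      by (simp add: tendsto_Lim trivial_limit_at_left_real)
    have "continuous (at_right s) f" using cad s0 unfolding cadlag_def by auto
    then have rc: "(f \<longlongrightarrow> f s) (at_right s)" by (simp add: continuous_within)
    have "eventually (\<lambda>r. dist (f r) L < delta / 4) (at_left s)"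
      using L dp unfolding tendsto_iff by (metis zero_less_divide_iff zero_less_numeral)
    then obtain b where b: "b < s" "\<And>z. b < z \<Longrightarrow> z < s \<Longrightarrow> dist (f z) L < delta / 4"
      unfolding eventually_at_left_field by auto
    have "eventually (\<lambda>r. dist (f r) (f s) < delta / 4) (at_right s)"
      using rc dp unfolding tendsto_iff by (metis zero_less_divide_iff zero_less_numeral)
    then obtain b' where b': "s < b'" "\<And>z. s < z \<Longrightarrow> z < b' \<Longrightarrow> dist (f z) (f s) < delta / 4"
      unfolding eventually_at_right_field by auto
    have "eventually (\<lambda>m::nat. 0 < m \<and> v / real m < min (s - b) (b' - s)) sequentially"
      by (rule ev_small) (use vp b b' in auto)
    then show ?thesis
    proof eventually_elim
      case (elim m)
      note ip = idx_props[OF s0, of m, folded idx_def]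
      define i where "i = idx m s"
      have m0: "0 < m" using elim by simp
      have t1: "b < v * real i / m" "v * real i / m < s"
        using ip(1,3)[folded i_def] elim by auto
      have l: "\<bar>f (v * real i / m) - L\<bar> < delta / 4" using b(2)[OF t1] by (simp add: dist_real_def)
      have r: "\<bar>f (v * real (Suc i) / m) - f s\<bar> < delta / 4"
      proof (cases "v * real (Suc i) / m = s")
        case True then show ?thesis using dp by simp
      next
        case False
        then have "s < v * real (Suc i) / m" "v * real (Suc i) / m < b'"
          using ip(2,4)[folded i_def] elim by auto
        then show ?thesis using b'(2) by (simp add: dist_real_def)
      qed
      have "delta \<le> \<bar>f s - L\<bar>" using big[OF sS] jL by simp
      then have "delta / 2 \<le> \<bar>f (v * real (Suc i) / real m) - f (v * real i / real m)\<bar>"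
        using l r by linarith
      then show ?case unfolding Good_def i_def using ip(5) m0 by auto
    qed
  qed
  have two: "eventually (\<lambda>m. idx m s \<noteq> idx m s') sequentially"
    if sS: "s \<in> S" "s' \<in> S" "s \<noteq> s'" for s s'
  proof -
    have s0: "0 < s" "s \<le> v" "0 < s'" "s' \<le> v" using sS Ssub by auto
    have "eventually (\<lambda>m::nat. 0 < m \<and> v / real m < \<bar>s - s'\<bar>) sequentially"
      by (rule ev_small) (use vp sS in auto)
    then show ?thesis
    proof eventually_elim
      case (elim m)
      note ip1 = idx_props[OF s0(1,2), of m, folded idx_def]
      note ip2 = idx_props[OF s0(3,4), of m, folded idx_def]
      show ?case
      proof
        assume eq: "idx m s = idx m s'"
        have "v * real (Suc (idx m s)) / m - v * real (idx m s) / m = v / m"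
          by (simp add: add_divide_distrib distrib_left)
        moreover have "0 < m" using elim by simp
        ultimately have "\<bar>s - s'\<bar> < v / m" using ip1(1,2) ip2(1,2) eq by (simp add: abs_less_iff)
        then show False using elim by simp
      qed
    qed
  qed
  have "eventually (\<lambda>m. \<forall>s\<in>S. 0 < m \<and> idx m s \<in> Good m) sequentially"
    using one fin by (simp add: eventually_ball_finite)
  moreover have "eventually (\<lambda>m. \<forall>p\<in>S \<times> S. fst p \<noteq> snd p \<longrightarrow> idx m (fst p) \<noteq> idx m (snd p)) sequentially"
    using two fin by (intro eventually_ball_finite) (auto intro: eventually_mono)
  ultimately show ?thesis
  proof (eventually_elim)
    case (elim m)
    have inj: "inj_on (idx m) S" using elim(2) unfolding inj_on_def by fastforce
    have "finite (Good m)" unfolding Good_def by auto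
    then have "card (idx m ` S) \<le> card (Good m)" using elim(1) by (intro card_mono) auto
    then show ?case using card_image[OF inj] unfolding Good_def by simp
  qed
qed



lemma prog_section:
  fixes M :: "'a measure" and Ft :: "'a measure" and X :: "real \<Rightarrow> 'a \<Rightarrow> real"
  assumes pm: "(\<lambda>(s, w). X s w) \<in> borel_measurable (restrict_space (borel \<Otimes>\<^sub>M Ft) ({0..t} \<times> space M))"
    and sp: "space Ft = space M" and w: "w \<in> space M"
  shows "(\<lambda>s. indicator {0..t} s * X s w) \<in> borel_measurable borel"
proof -
  have "(\<lambda>s. (s, w)) \<in> measurable borel (borel \<Otimes>\<^sub>M Ft)"
    by (rule measurable_Pair2') (simp add: sp w)
  then have "(\<lambda>s. (s, w)) \<in> measurable (restrict_space borel {0..t}) (restrict_space (borel \<Otimes>\<^sub>M Ft) ({0..t} \<times> space M))"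
    by (rule measurable_restrict_space3) (auto simp: w)
  from measurable_comp[OF this pm]
  have "(\<lambda>s. X s w) \<in> borel_measurable (restrict_space borel {0..t})" by (simp add: o_def)
  then have "(\<lambda>s. indicator {0..t} s *\<^sub>R X s w) \<in> borel_measurable borel"
    by (subst (asm) borel_measurable_restrict_space_iff) auto
  then show ?thesis by simp
qed

lemma lint_incr:
  fixes g :: "real \<Rightarrow> real"
  assumes hm: "(\<lambda>x. indicator {0..t} x * g x) \<in> borel_measurable borel"
    and gb: "\<And>x. 0 \<le> x \<Longrightarrow> \<bar>g x\<bar> \<le> C" and s: "0 \<le> s" "s \<le> t"
  shows "(LINT x:{0..t}|lborel. g x) - (LINT x:{0..s}|lborel. g x) \<le> C * (t - s)"
proof -
  define h where "h x = indicator {0..t} x * g x" for x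
  have hs: "indicator {0..s} x * g x = indicator {0..s} x * h x" for x
    using s unfolding h_def by (auto split: split_indicator)
  have hd: "indicator {0..t} x * g x - indicator {0..s} x * g x = indicator {s<..t} x * h x" for x
    using s unfolding h_def by (auto split: split_indicator)
  have hmeas: "h \<in> borel_measurable lborel" using hm unfolding h_def by simp
  have ih: "integrable lborel (\<lambda>x. indicator A x * h x)" if "A \<in> sets borel" for A
  proof (rule Bochner_Integration.integrable_bound[where f="\<lambda>x. C * indicator {0..t} x"])
    show "integrable lborel (\<lambda>x. C * indicator {0..t} x :: real)"
      using s by (intro integrable_mult_right integrable_real_indicator) auto
    show "(\<lambda>x. indicator A x * h x) \<in> borel_measurable lborel" using hmeas that by measurable
    show "AE x in lborel. norm (indicator A x * h x) \<le> norm (C * indicator {0..t} x :: real)"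
    proof (rule AE_I2)
      fix x
      have "\<bar>indicator A x * h x\<bar> \<le> C * indicator {0..t} x"
        unfolding h_def using gb[of x] by (auto split: split_indicator)
      then show "norm (indicator A x * h x) \<le> norm (C * indicator {0..t} x :: real)" by simp
    qed
  qed
  have "(LINT x:{0..t}|lborel. g x) - (LINT x:{0..s}|lborel. g x)
      = (\<integral>x. indicator {0..t} x * g x \<partial>lborel) - (\<integral>x. indicator {0..s} x * g x \<partial>lborel)"
    unfolding set_lebesgue_integral_def by simp
  also have "\<dots> = (\<integral>x. indicator {0..t} x * g x - indicator {0..s} x * g x \<partial>lborel)"
  proof -
    have e1: "(\<lambda>x. indicator {0..t} x * h x) = (\<lambda>x. indicator {0..t} x * g x)"
      unfolding h_def by (auto simp: fun_eq_iff split: split_indicator)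
    have e2: "(\<lambda>x. indicator {0..s} x * h x) = (\<lambda>x. indicator {0..s} x * g x)"
      by (rule ext, rule hs[symmetric])
    show ?thesis
      by (rule Bochner_Integration.integral_diff[symmetric]) (use ih[of "{0..t}"] ih[of "{0..s}"] e1 e2 in auto)
  qed
  also have "\<dots> = (\<integral>x. indicator {s<..t} x * h x \<partial>lborel)" unfolding hd ..
  also have "\<dots> \<le> (\<integral>x. C * indicator {s<..t} x \<partial>lborel)"
  proof (rule integral_mono)
    show "integrable lborel (\<lambda>x. indicator {s<..t} x * h x)" by (rule ih) simp
    show "integrable lborel (\<lambda>x. C * indicator {s<..t} x :: real)"
      using s by (intro integrable_mult_right integrable_real_indicator) auto
    fix x show "indicator {s<..t} x * h x \<le> C * indicator {s<..t} x"
      unfolding h_def using gb[of x] s by (auto split: split_indicator)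
  qed
  also have "\<dots> = C * (t - s)" using s by simp
  finally show ?thesis .
qed

lemma powr_exp_bound:
  fixes y p :: real
  assumes "0 \<le> y" "1 \<le> p"
  shows "y powr p \<le> real (nat \<lceil>p\<rceil>) ^ nat \<lceil>p\<rceil> * exp y"
proof -
  define P where "P = nat \<lceil>p\<rceil>"
  have P1: "1 \<le> P" "p \<le> real P" using assms unfolding P_def by linarith+
  have PP: "1 \<le> real P ^ P" using P1 by simp
  have "y powr p \<le> real P ^ P * exp y"
  proof (cases "y \<le> 1")
    case True
    have "y powr p \<le> 1 powr p" using True assms by (intro powr_mono2) auto
    then have "y powr p \<le> 1" by simp
    also have "1 \<le> real P ^ P * exp y" using PP assms(1) by (metis mult_mono one_le_exp_iff mult_1_right order.trans zero_le_one exp_ge_zero)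
    finally show ?thesis .
  next
    case False
    have "y powr p \<le> y powr real P" using False P1 by (intro powr_mono) auto
    also have "\<dots> = y ^ P" using False by (simp add: powr_realpow)
    also have "y \<le> real P * exp (y / real P)"
    proof -
      have "y / real P \<le> exp (y / real P)" using exp_ge_add_one_self[of "y / real P"] by linarith
      then show ?thesis using P1 by (simp add: field_simps)
    qed
    then have "y ^ P \<le> (real P * exp (y / real P)) ^ P" using assms by (intro power_mono) auto
    also have "\<dots> = real P ^ P * exp y" using P1
      by (simp add: power_mult_distrib exp_of_nat_mult[symmetric])
    finally show ?thesis .
  qed
  then show ?thesis by (simp add: P_def)
qed




lemma scale_id:
  fixes N :: nat and d :: nat and k :: real
  assumes "1 \<le> N"
  shows "real N ^ d * (1 / real N) powr (real d + 2 * k) = ((1 / real N) powr k)\<^sup>2"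
proof -
  have Np: "0 < real N" using assms by simp
  have "(1 / real N) powr (real d + 2 * k) = (1 / real N) powr real d * (1 / real N) powr (2 * k)"
    by (simp add: powr_add)
  also have "(1 / real N) powr real d = (1 / real N) ^ d" using Np by (simp add: powr_realpow)
  also have "(1 / real N) powr (2 * k) = ((1 / real N) powr k)\<^sup>2"
    by (simp add: power2_eq_square powr_add[symmetric])
  finally have "(1 / real N) powr (real d + 2 * k) = (1 / real N) ^ d * ((1 / real N) powr k)\<^sup>2" .
  then show ?thesis using Np by (simp add: power_one_over)
qed

lemma sum_indicator_card:
  fixes m :: nat
  shows "(\<Sum>i<m. indicator {w. Q i w} w :: real) = real (card {i. i < m \<and> Q i w})"
proof -
  have "(\<Sum>i<m. indicator {w. Q i w} w :: real) = (\<Sum>i<m. of_bool (Q i w))"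
    by (intro sum.cong) (auto split: split_indicator)
  also have "\<dots> = real (card ({..<m} \<inter> {i. Q i w}))" by (rule sum_of_bool_eq) simp_all
  also have "{..<m} \<inter> {i. Q i w} = {i. i < m \<and> Q i w}" by auto
  finally show ?thesis .
qed

theorem lemma2p5:
  fixes M :: "'a measure" and F :: "real \<Rightarrow> 'a measure"
    and MM :: "nat \<Rightarrow> (nat \<Rightarrow> nat) \<Rightarrow> real \<Rightarrow> 'a \<Rightarrow> real"
    and CC Cd :: "nat \<Rightarrow> (nat \<Rightarrow> nat) \<Rightarrow> real \<Rightarrow> 'a \<Rightarrow> real"
    and d :: nat and k c C :: real
  assumes prob: "prob_space M"
    and filt: "filtration M F"
    and usual: "usual_conditions M F"
    and d_pos: "d \<ge> 1"
    and mart: "\<And>N x. N \<ge> 1 \<Longrightarrow> x \<in> lattice N d \<Longrightarrow>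
        martingale M F (MM N x) \<and> square_integrable M (MM N x) \<and>
        (\<forall>\<omega>\<in>space M. cadlag (\<lambda>t. MM N x t \<omega>))"
    and A1_cross: "\<And>N x y. N \<ge> 1 \<Longrightarrow> x \<in> lattice N d \<Longrightarrow> y \<in> lattice N d \<Longrightarrow> x \<noteq> y \<Longrightarrow>
        is_pred_qcov M F (MM N x) (MM N y) (\<lambda>t \<omega>. 0)"
    and A1_diag: "\<And>N x. N \<ge> 1 \<Longrightarrow> x \<in> lattice N d \<Longrightarrow>
        is_pred_qcov M F (MM N x) (MM N x)
          (\<lambda>t \<omega>. real N ^ d * (LINT s:{0..t}|lborel. CC N x s \<omega>))"
    and A1_prog: "\<And>N x. N \<ge> 1 \<Longrightarrow> x \<in> lattice N d \<Longrightarrow> progressive M F (CC N x)"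
    and A1_bound: "\<And>N. N \<ge> 1 \<Longrightarrow>
        AE \<omega> in M. \<forall>x\<in>lattice N d. \<forall>s\<ge>0. \<bar>CC N x s \<omega>\<bar> \<le> C"
    and A2: "\<And>N T. N \<ge> 1 \<Longrightarrow> T > 0 \<Longrightarrow>
        AE \<omega> in M. \<forall>x\<in>lattice N d. \<forall>y\<in>lattice N d. x \<noteq> y \<longrightarrow>
          (\<forall>t\<in>{0..T}. jump (\<lambda>s. MM N x s \<omega>) t * jump (\<lambda>s. MM N y s \<omega>) t = 0)"
    and k_bound: "k > - real d / 2"
    and c_pos: "c > 0"
    and A3: "\<And>N. N \<ge> 1 \<Longrightarrow>
        AE \<omega> in M. \<forall>x\<in>lattice N d. \<forall>t\<ge>0. jump (\<lambda>s. MM N x s \<omega>) t \<noteq> 0 \<longrightarrow>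
          \<bar>jump (\<lambda>s. MM N x s \<omega>) t\<bar> = c * (1 / real N) powr k"
    and A4: "\<And>N. N \<ge> 1 \<Longrightarrow>
        AE \<omega> in M. \<forall>x\<in>lattice N d. \<forall>t\<ge>0.
          MM N x t \<omega> = (\<Sum>s\<in>{s\<in>{0..t}. jump (\<lambda>r. MM N x r \<omega>) s \<noteq> 0}. jump (\<lambda>r. MM N x r \<omega>) s)
            - real N powr (k + real d) * (LINT s:{0..t}|lborel. Cd N x s \<omega>)"
    and A4_prog: "\<And>N x. N \<ge> 1 \<Longrightarrow> x \<in> lattice N d \<Longrightarrow> progressive M F (Cd N x)"
    and A4_bound: "\<And>N. N \<ge> 1 \<Longrightarrow>
        AE \<omega> in M. \<forall>x\<in>lattice N d. \<forall>s\<ge>0. \<bar>Cd N x s \<omega>\<bar> \<le> C"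
  shows "\<forall>p\<ge>1. \<forall>B\<ge>0. \<exists>K::real. \<forall>a b. 0 \<le> a \<longrightarrow> a \<le> b \<longrightarrow> b \<le> B \<longrightarrow>
           (\<forall>N\<ge>1. \<forall>x\<in>lattice N d.
              (\<integral>\<^sup>+ \<omega>. ennreal (real (njumps (\<lambda>t. MM N x t \<omega>)
                   {(1 / real N) powr (real d + 2 * k) * a .. (1 / real N) powr (real d + 2 * k) * b}) powr p) \<partial>M)
              \<le> ennreal K)"
proof (intro allI impI)
  fix p B :: real
  assume p: "1 \<le> p" and B: "0 \<le> B"
  interpret prob_space M by (rule prob)
  have lat1: "(\<lambda>_. 0::nat) \<in> lattice 1 d" unfolding lattice_def by simp
  have C0: "0 \<le> C"
  proof (rule ccontr)
    assume "\<not> 0 \<le> C"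
    have h: "AE w in M. \<forall>x\<in>lattice 1 d. \<forall>s\<ge>0. \<bar>CC 1 x s w\<bar> \<le> C" by (rule A1_bound) simp
    from h have "AE w in M. False"
    proof eventually_elim
      case (elim w)
      then have "\<bar>CC 1 (\<lambda>_. 0) 0 w\<bar> \<le> C" using lat1 by blast
      then show False using \<open>\<not> 0 \<le> C\<close> by linarith
    qed
    then show False by (simp add: AE_False)
  qed
  define P where "P = nat \<lceil>p\<rceil>"
  define K where "K = real P ^ P * exp (8 * C * B / c\<^sup>2)"
  show "\<exists>K::real. \<forall>a b. 0 \<le> a \<longrightarrow> a \<le> b \<longrightarrow> b \<le> B \<longrightarrow>
           (\<forall>N\<ge>1. \<forall>x\<in>lattice N d.
              (\<integral>\<^sup>+ \<omega>. ennreal (real (njumps (\<lambda>t. MM N x t \<omega>)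
                   {(1 / real N) powr (real d + 2 * k) * a .. (1 / real N) powr (real d + 2 * k) * b}) powr p) \<partial>M)
              \<le> ennreal K)"
  proof (intro exI[of _ K] allI impI ballI)
    fix a b :: real and N :: nat and x
    assume a0: "0 \<le> a" and ab: "a \<le> b" and bB: "b \<le> B" and N: "1 \<le> N" and x: "x \<in> lattice N d"
    define e where "e = (1 / real N) powr (real d + 2 * k)"
    define u where "u = e * a"
    define v where "v = e * b"
    define X where "X = MM N x"
    define nj where "nj w = njumps (\<lambda>t. X t w) {u..v}" for w
    have e0: "0 < e" unfolding e_def using N by simp
    have u0: "0 \<le> u" unfolding u_def using e0 a0 by simp
    have uv: "u \<le> v" unfolding u_def v_def using e0 ab by (simp add: mult_left_mono)
    have goal: "(\<integral>\<^sup>+ w. ennreal (real (nj w) powr p) \<partial>M) \<le> ennreal K"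
    proof (cases "v > 0")
      case False
      have "nj w = 0" for w
      proof -
        have "{t \<in> {u..v}. jump (\<lambda>t. X t w) t \<noteq> 0} = {}"
          using False by (auto simp: jump_def)
        then show ?thesis unfolding nj_def njumps_def by (metis card.empty)
      qed
      then show ?thesis by simp
    next
      case True
      note v0 = True
      define delta where "delta = c * (1 / real N) powr k"
      have dp: "0 < delta" unfolding delta_def using c_pos N by simp
      define t where "t m i = v * real i / real m" for m i :: nat
      define xi where "xi m i w = (indicator {w. delta / 2 \<le> \<bar>X (t m (Suc i)) w - X (t m i) w\<bar>} w :: real)" for m i :: nat and w
      define A where "A r w = real N ^ d * (LINT s:{0..r}|lborel. CC N x s w)" for r w
      have t0: "0 \<le> t m i" for m i unfolding t_def using v0 by simp
      have tmono: "i \<le> j \<Longrightarrow> t m i \<le> t m j" for m i j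
        unfolding t_def using v0 by (intro divide_right_mono mult_left_mono) auto
      have tdiff: "t m (Suc i) - t m i = v / real m" for m i
        unfolding t_def by (simp add: diff_divide_distrib[symmetric] algebra_simps)
      have sub_t: "0 \<le> r \<Longrightarrow> subalgebra M (F r)" for r using filt unfolding filtration_def by auto
      have mono_t: "0 \<le> r \<Longrightarrow> r \<le> r' \<Longrightarrow> sets (F r) \<subseteq> sets (F r')" for r r' using filt unfolding filtration_def by auto
      have sub_rr: "subalgebra (F r') (F r)" if "0 \<le> r" "r \<le> r'" for r r'
        using sub_t[of r] sub_t[of r'] mono_t[of r r'] that unfolding subalgebra_def by auto
      have martX: "martingale M F X" and sqX: "square_integrable M X" and cadX: "\<forall>w\<in>space M. cadlag (\<lambda>t. X t w)"
        using mart[OF N x] unfolding X_def by auto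
      have Xm: "0 \<le> r \<Longrightarrow> X r \<in> borel_measurable (F r)" for r using martX unfolding martingale_def adapted_def by auto
      have Xm': "X r \<in> borel_measurable (F r')" if "0 \<le> r" "r \<le> r'" for r r'
        using measurable_from_subalg[OF sub_rr[OF that] Xm[OF that(1)]] .
      have XM: "X r \<in> borel_measurable M" if "0 \<le> r" for r using measurable_from_subalg[OF sub_t[OF that] Xm[OF that]] .
      have sq: "0 \<le> r \<Longrightarrow> integrable M (\<lambda>w. (X r w)\<^sup>2)" for r using sqX unfolding square_integrable_def by auto
      have ce: "0 \<le> r \<Longrightarrow> r \<le> r' \<Longrightarrow> AE w in M. real_cond_exp M (F r) (X r') w = X r w" for r r'
        using martX unfolding martingale_def by auto
      have martW: "martingale M F (\<lambda>t w. X t w * X t w - A t w)"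
        using A1_diag[OF N x] unfolding is_pred_qcov_def X_def A_def by auto
      have Wi: "0 \<le> r \<Longrightarrow> integrable M (\<lambda>w. X r w * X r w - A r w)" for r using martW unfolding martingale_def by auto
      have cW: "0 \<le> r \<Longrightarrow> r \<le> r' \<Longrightarrow> AE w in M. real_cond_exp M (F r) (\<lambda>w. X r' w * X r' w - A r' w) w = X r w * X r w - A r w" for r r'
        using martW unfolding martingale_def by auto
      have Abd: "AE w in M. A r' w - A r w \<le> C * real N ^ d * (r' - r)" if r: "0 \<le> r" "r \<le> r'" for r r'
      proof -
        have h: "AE w in M. \<forall>x\<in>lattice N d. \<forall>s\<ge>0. \<bar>CC N x s w\<bar> \<le> C" by (rule A1_bound[OF N])
        show ?thesis
          using h AE_space
        proof eventually_elim
          case (elim w)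
          have gb: "\<And>s. 0 \<le> s \<Longrightarrow> \<bar>CC N x s w\<bar> \<le> C" using elim x by blast
          have pm: "(\<lambda>(s, w). CC N x s w) \<in> borel_measurable (restrict_space (borel \<Otimes>\<^sub>M F r') ({0..r'} \<times> space M))"
            using A1_prog[OF N x] r unfolding progressive_def by auto
          have sp: "space (F r') = space M" using sub_t[of r'] r unfolding subalgebra_def by auto
          have "(LINT s:{0..r'}|lborel. CC N x s w) - (LINT s:{0..r}|lborel. CC N x s w) \<le> C * (r' - r)"
            by (rule lint_incr[OF prog_section[OF pm sp elim(2)] gb r])
          then have "real N ^ d * ((LINT s:{0..r'}|lborel. CC N x s w) - (LINT s:{0..r}|lborel. CC N x s w)) \<le> real N ^ d * (C * (r' - r))"
            by (intro mult_left_mono) auto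
          then show ?case unfolding A_def by (simp add: algebra_simps)
        qed
      qed
      define q where "q m = C * real N ^ d * (v / real m) / (delta / 2)\<^sup>2" for m :: nat
      have q0: "0 \<le> q m" for m unfolding q_def using C0 v0 by simp
      have ximeas: "xi m i \<in> borel_measurable (F (t m (Suc i)))" for m i
      proof -
        have [measurable]: "X (t m (Suc i)) \<in> borel_measurable (F (t m (Suc i)))" by (rule Xm[OF t0])
        have [measurable]: "X (t m i) \<in> borel_measurable (F (t m (Suc i)))" by (rule Xm'[OF t0 tmono]) simp
        show ?thesis unfolding xi_def by measurable
      qed
      have expb: "integrable M (\<lambda>w. exp (\<Sum>i<m. xi m i w)) \<and>
          (\<integral>w. exp (\<Sum>i<m. xi m i w) \<partial>M) \<le> exp (2 * (\<Sum>i<m. q m))" for m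
      proof -
        have s1: "\<And>i. subalgebra M (F (t m i))" using sub_t t0 by blast
        have s2: "\<And>i j. i \<le> j \<Longrightarrow> sets (F (t m i)) \<subseteq> sets (F (t m j))" using mono_t t0 tmono by blast
        have s3: "\<And>i w. xi m i w = 0 \<or> xi m i w = 1" unfolding xi_def by (simp split: split_indicator)
        have s4: "(\<integral>w. Z w * xi m i w \<partial>M) \<le> q m * (\<integral>w. Z w \<partial>M)"
          if Z: "Z \<in> borel_measurable (F (t m i))" "\<And>w. 0 \<le> Z w" "\<And>w. Z w \<le> Zb" for i Z Zb
        proof -
          have ti: "0 \<le> t m i" "t m i \<le> t m (Suc i)" by (rule t0, rule tmono) simp
          have Ab: "AE w in M. A (t m (Suc i)) w - A (t m i) w \<le> C * real N ^ d * (v / real m)"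
            using Abd[OF ti] unfolding tdiff .
          have "(\<integral>w. Z w * indicator {w. delta / 2 \<le> \<bar>X (t m (Suc i)) w - X (t m i) w\<bar>} w \<partial>M)
              \<le> C * real N ^ d * (v / real m) / (delta / 2)\<^sup>2 * (\<integral>w. Z w \<partial>M)"
            by (rule cheb_bound[OF prob sub_t[OF ti(1)] Xm[OF ti(1)] XM[OF order.trans[OF ti]]
                  sq[OF ti(1)] sq[OF order.trans[OF ti]] ce[OF ti] Wi[OF ti(1)] Wi[OF order.trans[OF ti]]
                  cW[OF ti] Ab Z]) (use dp in simp)
          then show ?thesis unfolding xi_def q_def .
        qed
        have e1: "(\<integral>w. exp (\<Sum>i<m. xi m i w) \<partial>M) \<le> exp (2 * (\<Sum>i<m. q m))"
          by (rule exp_sum_bound(1)[where G="\<lambda>i. F (t m i)" and q="\<lambda>_. q m"])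
             (fact prob, fact s1, fact s2, fact ximeas, fact s3, fact q0, rule s4, assumption+)
        have e2: "integrable M (\<lambda>w. exp (\<Sum>i<m. xi m i w))"
          by (rule exp_sum_bound(2)[where G="\<lambda>i. F (t m i)" and q="\<lambda>_. q m"])
             (fact prob, fact s1, fact s2, fact ximeas, fact s3, fact q0, rule s4, assumption+)
        show ?thesis using e1 e2 by blast
      qed
      have sumq: "2 * (\<Sum>i<m. q m) \<le> 8 * C * B / c\<^sup>2" for m
      proof -
        have "(\<Sum>i<m. q m) = real m * q m" by simp
        also have "\<dots> = C * real N ^ d * (real m * (v / real m)) / (delta / 2)\<^sup>2" unfolding q_def by simp
        also have "\<dots> \<le> C * real N ^ d * v / (delta / 2)\<^sup>2"
        proof -
          have "real m * (v / real m) \<le> v" using v0 by (cases "m = 0") auto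
          then show ?thesis using C0 by (intro divide_right_mono mult_left_mono) auto
        qed
        also have "\<dots> = 4 * C * b / c\<^sup>2"
        proof -
          have "real N ^ d * v = ((1 / real N) powr k)\<^sup>2 * b"
            unfolding v_def e_def using scale_id[OF N, of d k] by simp
          then show ?thesis unfolding delta_def using c_pos N
            by (simp add: power_mult_distrib field_simps)
        qed
        also have "\<dots> \<le> 4 * C * B / c\<^sup>2" using bB C0 c_pos by (intro divide_right_mono mult_left_mono) auto
        finally show ?thesis by simp
      qed
      have ae_path: "AE w in M. ennreal (real (nj w) powr p) \<le> liminf (\<lambda>m. ennreal (real P ^ P * exp (\<Sum>i<m. xi m i w)))"
        using A3[OF N] AE_space
      proof eventually_elim
        case (elim w)
        define f where "f s = X s w" for s
        have cf: "cadlag f" using cadX elim(2) unfolding f_def by auto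
        define S where "S = {s \<in> {u..v}. jump f s \<noteq> 0}"
        have njS: "nj w = card S" unfolding nj_def njumps_def S_def f_def ..
        show ?case
        proof (cases "finite S")
          case False
          then have "nj w = 0" using njS by simp
          then show ?thesis using p by simp
        next
          case True
          have Ssub: "S \<subseteq> {0<..v}" unfolding S_def jump_def by (auto split: if_splits)
          have big: "delta \<le> \<bar>jump f s\<bar>" if "s \<in> S" for s
          proof -
            have "0 \<le> s" "jump f s \<noteq> 0" using that u0 unfolding S_def by auto
            then have "\<bar>jump f s\<bar> = c * (1 / real N) powr k" using elim(1) x unfolding f_def X_def by blast
            then show ?thesis unfolding delta_def by simp
          qed
          have ev: "eventually (\<lambda>m. card S \<le> card {i. i < m \<and> delta / 2 \<le> \<bar>f (v * real (Suc i) / real m) - f (v * real i / real m)\<bar>}) sequentially"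
            by (rule path_count[OF cf True Ssub big dp v0])
          have pb: "real (nj w) powr p \<le> real P ^ P * exp (real (nj w))"
            using powr_exp_bound[of "real (nj w)" p] p unfolding P_def by simp
          have "eventually (\<lambda>m. ennreal (real (nj w) powr p) \<le> ennreal (real P ^ P * exp (\<Sum>i<m. xi m i w))) sequentially"
            using ev
          proof eventually_elim
            case (elim m)
            have sm: "(\<Sum>i<m. xi m i w) = real (card {i. i < m \<and> delta / 2 \<le> \<bar>f (v * real (Suc i) / real m) - f (v * real i / real m)\<bar>})"
              unfolding xi_def f_def t_def by (rule sum_indicator_card)
            have "real (nj w) \<le> (\<Sum>i<m. xi m i w)" using elim njS sm by simp
            then have "exp (real (nj w)) \<le> exp (\<Sum>i<m. xi m i w)" by simp
            then have "real P ^ P * exp (real (nj w)) \<le> real P ^ P * exp (\<Sum>i<m. xi m i w)"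
              by (intro mult_left_mono) auto
            then show ?case using pb by (intro ennreal_leI) linarith
          qed
          then show ?thesis by (rule Liminf_bounded)
        qed
      qed
      have meas_u: "(\<lambda>w. ennreal (real P ^ P * exp (\<Sum>i<m. xi m i w))) \<in> borel_measurable M" for m
      proof -
        have "(\<lambda>w. exp (\<Sum>i<m. xi m i w)) \<in> borel_measurable M" using expb[of m] by auto
        then show ?thesis by measurable
      qed
      have intb: "(\<integral>\<^sup>+ w. ennreal (real P ^ P * exp (\<Sum>i<m. xi m i w)) \<partial>M) \<le> ennreal K" for m
      proof -
        have i: "integrable M (\<lambda>w. real P ^ P * exp (\<Sum>i<m. xi m i w))" using expb[of m] by simp
        have "(\<integral>\<^sup>+ w. ennreal (real P ^ P * exp (\<Sum>i<m. xi m i w)) \<partial>M) = ennreal (\<integral>w. real P ^ P * exp (\<Sum>i<m. xi m i w) \<partial>M)"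
          by (rule nn_integral_eq_integral[OF i]) simp
        also have "(\<integral>w. real P ^ P * exp (\<Sum>i<m. xi m i w) \<partial>M) = real P ^ P * (\<integral>w. exp (\<Sum>i<m. xi m i w) \<partial>M)" by simp
        also have "\<dots> \<le> real P ^ P * exp (8 * C * B / c\<^sup>2)"
        proof (rule mult_left_mono)
          have "exp (2 * (\<Sum>i<m. q m)) \<le> exp (8 * C * B / c\<^sup>2)" using sumq[of m] by simp
          then show "(\<integral>w. exp (\<Sum>i<m. xi m i w) \<partial>M) \<le> exp (8 * C * B / c\<^sup>2)" using expb[of m] by linarith
        qed simp
        finally show ?thesis unfolding K_def by (simp add: ennreal_leI)
      qed
      have "(\<integral>\<^sup>+ w. ennreal (real (nj w) powr p) \<partial>M) \<le> (\<integral>\<^sup>+ w. liminf (\<lambda>m. ennreal (real P ^ P * exp (\<Sum>i<m. xi m i w))) \<partial>M)"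
        by (rule nn_integral_mono_AE[OF ae_path])
      also have "\<dots> \<le> liminf (\<lambda>m. \<integral>\<^sup>+ w. ennreal (real P ^ P * exp (\<Sum>i<m. xi m i w)) \<partial>M)"
        by (rule nn_integral_liminf[OF meas_u])
      also have "\<dots> \<le> ennreal K" by (rule Liminf_le) (simp_all add: intb always_eventually)
      finally show ?thesis .
    qed
    then show "(\<integral>\<^sup>+ \<omega>. ennreal (real (njumps (\<lambda>t. MM N x t \<omega>)
                   {(1 / real N) powr (real d + 2 * k) * a .. (1 / real N) powr (real d + 2 * k) * b}) powr p) \<partial>M)
              \<le> ennreal K"
      unfolding nj_def X_def u_def v_def e_def .
  qed
qed

end
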